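(* Let $n\ge2$, $C>0$, $\lambda>0$, and $$0<R<\min\Big\{\frac{x_1}{\lambda},\ \sqrt{\tfrac38(3n-5)(2n-3)^3}\Big\}.$$ Then $u:=u^*-v$ satisfies $$u_t\le\Delta u+uu_r^3\qquad\text{in }(B_R\setminus\{0\})\times(0,\infty).$$
   Context: $B_R=\{x\in\mathbb R^n:|x|<R\}$; radial functions are written in $r=|x|$, subscript $r$ is the radial derivative. $\alpha:=\sqrt[3]{9n-15}$, $u^*(r):=-\alpha r^{1/3}$, $\nu:=\tfrac16\sqrt{36n^2-96n+61}$, $J_\nu$ is the Bessel function of the first kind of order $\nu$, and $v(r,t):=Ce^{-\lambda^2t}r^{n-\frac32}J_\nu(\lambda r)$. $x_0>0$ and $x_1\in(0,x_0)$ denote the first positive roots of $J_\nu$ and of $J_\nu'$, respectively. *)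

theory Defs
  imports "HOL-Analysis.Analysis"
begin

definition bessel_J :: "real \<Rightarrow> real \<Rightarrow> real" where
  "bessel_J nu x = (\<Sum>m. (-1) ^ m / (fact m * Gamma (real m + nu + 1)) * (x / 2) powr (2 * real m + nu))"

definition nu_of :: "nat \<Rightarrow> real" where
  "nu_of n = sqrt (36 * (real n)^2 - 96 * real n + 61) / 6"

definition alpha_of :: "nat \<Rightarrow> real" where
  "alpha_of n = root 3 (9 * real n - 15)"

definition ustar :: "nat \<Rightarrow> real \<Rightarrow> real" where
  "ustar n r = - alpha_of n * r powr (1/3)"

definition vfun :: "nat \<Rightarrow> real \<Rightarrow> real \<Rightarrow> real \<Rightarrow> real \<Rightarrow> real" where
  "vfun n C lm r t = C * exp (- (lm * lm * t)) * r powr (real n - 3/2) * bessel_J (nu_of n) (lm * r)"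

definition usol :: "nat \<Rightarrow> real \<Rightarrow> real \<Rightarrow> real \<Rightarrow> real \<Rightarrow> real" where
  "usol n C lm r t = ustar n r - vfun n C lm r t"

definition x1_of :: "nat \<Rightarrow> real" where
  "x1_of n = (LEAST x. x > 0 \<and> deriv (bessel_J (nu_of n)) x = 0)"

end

theory Submission
  imports Defs
begin


lemma Gamma_succ: "(x::real) > 0 \<Longrightarrow> Gamma (x + 1) = x * Gamma x"
  by (rule Gamma_plus1) (auto dest: nonpos_Ints_nonpos)

definition bc :: "real \<Rightarrow> nat \<Rightarrow> real" where
  "bc nu m = (-1)^m / (fact m * Gamma (real m + nu + 1))"

definition BF :: "real \<Rightarrow> real \<Rightarrow> real" where "BF nu y = (\<Sum>m. bc nu m * y^m)"
definition BF1 :: "real \<Rightarrow> real \<Rightarrow> real" where "BF1 nu y = (\<Sum>m. diffs (bc nu) m * y^m)"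
definition BF2 :: "real \<Rightarrow> real \<Rightarrow> real" where "BF2 nu y = (\<Sum>m. diffs (diffs (bc nu)) m * y^m)"

lemma Gamma_ge: assumes "nu > 0" shows "Gamma (real m + nu + 1) \<ge> Gamma (nu + 1)"
proof (induction m)
  case 0 then show ?case by simp
next
  case (Suc m)
  have p: "real m + nu + 1 > 0" using assms by simp
  have "Gamma (real (Suc m) + nu + 1) = (real m + nu + 1) * Gamma (real m + nu + 1)"
    using Gamma_succ[OF p] by (simp add: algebra_simps)
  moreover have "Gamma (real m + nu + 1) > 0" using p by simp
  moreover have "1 * Gamma (real m + nu + 1) \<le> (real m + nu + 1) * Gamma (real m + nu + 1)"
    using calculation(2) assms by (intro mult_right_mono) auto
  ultimately have "Gamma (real (Suc m) + nu + 1) \<ge> Gamma (real m + nu + 1)"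
    by simp
  then show ?case using Suc by linarith
qed

lemma bc_summable: assumes "nu > 0" shows "summable (\<lambda>m. bc nu m * y^m)"
proof (rule summable_comparison_test')
  show "summable (\<lambda>m. inverse (Gamma (nu+1)) * (inverse (fact m) * \<bar>y\<bar> ^ m))"
    by (intro summable_mult summable_exp)
  fix m :: nat
  have g0: "Gamma (nu+1) > 0" using assms by simp
  have g: "Gamma (real m + nu + 1) \<ge> Gamma (nu + 1)" using Gamma_ge[OF assms] .
  have "norm (bc nu m * y^m) = \<bar>y\<bar>^m / (fact m * Gamma (real m + nu + 1))"
    unfolding bc_def using g g0 by (simp add: abs_mult power_abs)
  also have "\<dots> \<le> \<bar>y\<bar>^m / (fact m * Gamma (nu + 1))"
    using g g0 by (intro divide_left_mono mult_left_mono mult_pos_pos) auto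
  also have "\<dots> = inverse (Gamma (nu+1)) * (inverse (fact m) * \<bar>y\<bar> ^ m)"
    by (simp add: field_simps)
  finally show "norm (bc nu m * y^m) \<le> inverse (Gamma (nu+1)) * (inverse (fact m) * \<bar>y\<bar> ^ m)" .
qed

lemma d1_summable: "nu > 0 \<Longrightarrow> summable (\<lambda>m. diffs (bc nu) m * y^m)"
  by (rule termdiff_converges_all) (rule bc_summable)
lemma d2_summable: "nu > 0 \<Longrightarrow> summable (\<lambda>m. diffs (diffs (bc nu)) m * y^m)"
  by (rule termdiff_converges_all, rule termdiff_converges_all) (rule bc_summable)

lemma BF_deriv: "nu > 0 \<Longrightarrow> (BF nu has_real_derivative BF1 nu y) (at y)"
  unfolding BF_def[abs_def] BF1_def
  by (rule termdiffs_strong_converges_everywhere) (rule bc_summable)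
lemma BF1_deriv: "nu > 0 \<Longrightarrow> (BF1 nu has_real_derivative BF2 nu y) (at y)"
  unfolding BF1_def[abs_def] BF2_def
  by (rule termdiffs_strong_converges_everywhere) (rule d1_summable)

lemma BF0: "BF nu 0 = 1 / Gamma (nu + 1)"
  unfolding BF_def using powser_zero[of "bc nu"] by (simp add: bc_def)

lemma bc_rec: assumes "nu > 0"
  shows "(real m + nu + 1) * (real m + 1) * bc nu (Suc m) + bc nu m = 0"
proof -
  have p: "real m + nu + 1 > 0" using assms by simp
  have G: "Gamma (real (Suc m) + nu + 1) = (real m + nu + 1) * Gamma (real m + nu + 1)"
    using Gamma_succ[OF p] by (simp add: algebra_simps)
  have g: "Gamma (real m + nu + 1) > 0" using p by simp
  have f: "fact m > (0::real)" by simp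
  define gg where "gg = Gamma (real m + nu + 1)"
  have "bc nu (Suc m) = (-1)^(Suc m) / (fact (Suc m) * Gamma (real (Suc m) + nu + 1))"
    by (simp only: bc_def)
  also have "\<dots> = (-1)^(Suc m) / (fact (Suc m) * ((real m + nu + 1) * gg))"
    by (simp only: G gg_def)
  also have "\<dots> = - ((-1)^m / (fact m * gg)) / ((real m + nu + 1) * (real m + 1))"
    using p g f unfolding gg_def[symmetric] by (simp add: fact_Suc field_simps)
  finally have "bc nu (Suc m) = - ((-1)^m / (fact m * gg)) / ((real m + nu + 1) * (real m + 1))" .
  moreover have "bc nu m = (-1)^m / (fact m * gg)" by (simp add: bc_def gg_def)
  moreover have "(real m + nu + 1) * (real m + 1) \<noteq> 0" using p by simp
  ultimately show ?thesis
    by (metis (no_types, lifting) add.commute ab_left_minus mult_minus_right nonzero_mult_div_cancel_left times_divide_eq_right)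
qed

lemma BF_ode: assumes "nu > 0"
  shows "y * BF2 nu y + (nu+1) * BF1 nu y + BF nu y = 0"
proof -
  let ?d = "diffs (bc nu)"
  have s2: "(\<lambda>m. diffs ?d m * y^m) sums BF2 nu y" unfolding BF2_def
    using d2_summable[OF assms] by (rule summable_sums)
  hence "(\<lambda>m. y * (diffs ?d m * y^m)) sums (y * BF2 nu y)" by (rule sums_mult)
  hence "(\<lambda>m. real (Suc m) * ?d (Suc m) * y ^ Suc m) sums (y * BF2 nu y)"
    by (simp add: diffs_def algebra_simps)
  hence a: "(\<lambda>m. real m * ?d m * y ^ m) sums (y * BF2 nu y)"
    by (subst (asm) sums_Suc_iff) simp
  have s1: "(\<lambda>m. ?d m * y^m) sums BF1 nu y" unfolding BF1_def
    using d1_summable[OF assms] by (rule summable_sums)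
  hence b: "(\<lambda>m. (nu+1) * (?d m * y^m)) sums ((nu+1) * BF1 nu y)" by (rule sums_mult)
  have c: "(\<lambda>m. bc nu m * y^m) sums BF nu y" unfolding BF_def
    using bc_summable[OF assms] by (rule summable_sums)
  have "(\<lambda>m. real m * ?d m * y ^ m + (nu+1) * (?d m * y^m) + bc nu m * y^m) sums
      (y * BF2 nu y + (nu+1) * BF1 nu y + BF nu y)"
    by (intro sums_add a b c)
  moreover have "(\<lambda>m. real m * ?d m * y ^ m + (nu+1) * (?d m * y^m) + bc nu m * y^m) = (\<lambda>m. 0)"
  proof
    fix m
    have "real m * ?d m * y ^ m + (nu+1) * (?d m * y^m) + bc nu m * y^m
        = ((real m + nu + 1) * (real m + 1) * bc nu (Suc m) + bc nu m) * y^m"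
      by (simp add: diffs_def algebra_simps)
    then show "real m * ?d m * y ^ m + (nu+1) * (?d m * y^m) + bc nu m * y^m = 0"
      using bc_rec[OF assms, of m] by simp
  qed
  ultimately show ?thesis using sums_unique2 sums_zero by metis
qed


lemma bessel_BF: assumes "nu > 0" "x > 0"
  shows "bessel_J nu x = (x/2) powr nu * BF nu ((x/2)^2)"
proof -
  have eq: "(-1) ^ m / (fact m * Gamma (real m + nu + 1)) * (x / 2) powr (2 * real m + nu)
      = (x/2) powr nu * (bc nu m * ((x/2)^2)^m)" for m
  proof -
    have "(x / 2) powr (2 * real m + nu) = (x/2) powr nu * (x/2) powr (real (2*m))"
      by (simp add: powr_add mult.commute)
    also have "(x/2) powr (real (2*m)) = ((x/2)^2)^m"
      using assms powr_realpow[of "x/2" "2*m"] by (simp only: power_mult)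
    finally show ?thesis by (simp add: bc_def)
  qed
  show ?thesis unfolding bessel_J_def eq BF_def
    by (rule suminf_mult) (rule bc_summable[OF assms(1)])
qed

definition BG :: "real \<Rightarrow> real \<Rightarrow> real" where
  "BG nu z = nu * BF nu z + 2 * z * BF1 nu z"

lemma BF_chain: "nu > 0 \<Longrightarrow> (g has_real_derivative g') (at x) \<Longrightarrow>
   ((\<lambda>x. BF nu (g x)) has_real_derivative BF1 nu (g x) * g') (at x)"
  by (rule DERIV_chain2[OF BF_deriv])
lemma BF1_chain: "nu > 0 \<Longrightarrow> (g has_real_derivative g') (at x) \<Longrightarrow>
   ((\<lambda>x. BF1 nu (g x)) has_real_derivative BF2 nu (g x) * g') (at x)"
  by (rule DERIV_chain2[OF BF1_deriv])

lemma bessel_deriv: assumes "nu > 0" "x > 0"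
  shows "(bessel_J nu has_real_derivative ((x/2) powr (nu - 1) / 2 * BG nu ((x/2)^2))) (at x)"
proof -
  have d: "((\<lambda>x. (x/2) powr nu * BF nu ((x/2)^2)) has_real_derivative
     (nu * (x/2) powr (nu - 1) * (1/2)) * BF nu ((x/2)^2) + (BF1 nu ((x/2)^2) * (2 * (x/2) * (1/2))) * (x/2) powr nu) (at x)"
  proof -
    have h: "((\<lambda>x. x/2) has_real_derivative 1/2) (at x)"
      by (auto intro!: derivative_eq_intros)
    have h2: "((\<lambda>x. (x/2)^2) has_real_derivative 2 * (x/2) * (1/2)) (at x)"
      by (auto intro!: derivative_eq_intros)
    show ?thesis using assms
      by (intro DERIV_mult BF_chain[OF _ h2] DERIV_chain2[OF has_real_derivative_powr h]) auto
  qed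
  have e: "(x/2) powr nu = (x/2) powr (nu - 1) * (x/2)"
    using assms by (simp add: powr_diff)
  have d2: "((\<lambda>x. (x/2) powr nu * BF nu ((x/2)^2)) has_real_derivative
     ((x/2) powr (nu - 1) / 2 * BG nu ((x/2)^2))) (at x)"
    using d unfolding e BG_def by (simp add: algebra_simps power2_eq_square)
  show ?thesis
    by (rule has_field_derivative_transform_within_open[OF d2, of "{0<..}"])
       (use assms bessel_BF in auto)
qed


lemma BF_isCont: "nu > 0 \<Longrightarrow> isCont (BF nu) z"
  using BF_deriv DERIV_isCont by blast
lemma BF1_isCont: "nu > 0 \<Longrightarrow> isCont (BF1 nu) z"
  using BF1_deriv DERIV_isCont by blast
lemma BG_isCont: "nu > 0 \<Longrightarrow> isCont (BG nu) z"
  unfolding BG_def[abs_def] using BF_isCont BF1_isCont by (intro continuous_intros) auto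

lemma BG_comp_cont: "nu > 0 \<Longrightarrow> continuous_on S (\<lambda>z. BG nu ((z/2)^2))"
  by (intro continuous_at_imp_continuous_on ballI continuous_intros isCont_o2[OF _ BG_isCont]) auto

lemma bessel_pos: assumes nu: "nu > 0" and x: "0 < x"
  and xl: "x < (LEAST x. x > 0 \<and> deriv (bessel_J nu) x = 0)"
  shows "BF nu ((x/2)^2) > 0 \<and> BG nu ((x/2)^2) > 0"
proof -
  let ?f = "\<lambda>z. BG nu ((z/2)^2)"
  let ?h = "\<lambda>z. min (BF nu z) (BG nu z)"
  have hc: "isCont ?h 0" using BF_isCont[OF nu] BG_isCont[OF nu] by (intro continuous_intros) auto
  have g0: "Gamma (nu + 1) > 0" using nu by simp
  have h0: "?h 0 > 0" using nu g0 by (simp add: BG_def BF0)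
  have "eventually (\<lambda>z. 0 < ?h z) (at 0)"
    using order_tendstoD(1)[OF hc[unfolded isCont_def] h0] .
  then obtain d where d: "d > 0" "\<And>z. z \<noteq> 0 \<Longrightarrow> dist z 0 < d \<Longrightarrow> 0 < ?h z"
    unfolding eventually_at by auto
  have small: "BF nu z > 0 \<and> BG nu z > 0" if "\<bar>z\<bar> < d" for z
  proof (cases "z = 0")
    case True then show ?thesis using h0 by simp
  next
    case False then show ?thesis using d(2)[of z] that by simp
  qed
  define e where "e = sqrt d"
  have e0: "e > 0" using d by (simp add: e_def)
  have smallx: "BF nu ((z/2)^2) > 0 \<and> BG nu ((z/2)^2) > 0" if "\<bar>z\<bar> \<le> e" for z
  proof -
    have "z^2 \<le> e^2" using that e0 abs_le_square_iff[of z e] by simp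
    hence "z^2 \<le> d" using d by (simp add: e_def)
    hence "\<bar>(z/2)^2\<bar> < d" using d by (simp add: power_divide)
    thus ?thesis by (rule small)
  qed
  let ?P = "\<lambda>x. x > 0 \<and> deriv (bessel_J nu) x = 0"
  have dz: "deriv (bessel_J nu) z = 0 \<longleftrightarrow> ?f z = 0" if "z > 0" for z
  proof -
    have "deriv (bessel_J nu) z = (z/2) powr (nu - 1) / 2 * ?f z"
      using bessel_deriv[OF nu that] by (rule DERIV_imp_deriv)
    moreover have "(z/2) powr (nu - 1) / 2 > 0" using that by simp
    ultimately show ?thesis by (metis mult_eq_0_iff less_irrefl)
  qed
  have claim1: "?f p > 0" if p: "0 < p" "p \<le> x" for p
  proof (rule ccontr)
    assume np: "\<not> ?f p > 0"
    have pe: "e \<le> p" using smallx[of p] np p by (cases "e \<le> p") auto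
    have fe: "?f e > 0" using smallx[of e] e0 by simp
    obtain z0 where z0: "e \<le> z0" "z0 \<le> p" "?f z0 = 0"
      using IVT2'[of ?f p 0 e] np fe pe BG_comp_cont[OF nu] by force
    define Z where "Z = {z \<in> {e..p}. ?f z = 0}"
    have "closed Z" unfolding Z_def
      by (rule continuous_closed_preimage_constant[OF BG_comp_cont[OF nu]]) simp
    moreover have "bounded Z" unfolding Z_def by (rule bounded_subset[of "{e..p}"]) auto
    ultimately have "compact Z" by (simp add: compact_eq_bounded_closed)
    moreover have "Z \<noteq> {}" using z0 unfolding Z_def by auto
    ultimately obtain m where m: "m \<in> Z" "\<And>y. y \<in> Z \<Longrightarrow> m \<le> y"
      using compact_attains_inf by metis
    have mpos: "m > 0" using m(1) e0 unfolding Z_def by auto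
    have "Least ?P = m"
    proof (rule Least_equality)
      show "?P m" using m(1) mpos dz unfolding Z_def by auto
      fix y assume y: "?P y"
      hence fy: "?f y = 0" using dz by auto
      show "m \<le> y"
      proof (cases "y \<le> p")
        case True
        have "e \<le> y" using smallx[of y] y fy by (cases "e \<le> y") auto
        then show ?thesis using True fy m(2) unfolding Z_def by auto
      next
        case False then show ?thesis using m(1) unfolding Z_def by auto
      qed
    qed
    moreover have "m \<le> p" using m(1) unfolding Z_def by auto
    ultimately show False using xl p by simp
  qed
  have "BF nu ((x/2)^2) > 0"
  proof (cases "x \<le> e")
    case True then show ?thesis using smallx[of x] x by simp
  next
    case False
    have "bessel_J nu e < bessel_J nu x"
    proof (rule DERIV_pos_imp_increasing[of e x "bessel_J nu"])
      show "e < x" using False by simp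
      fix z assume z: "e \<le> z" "z \<le> x"
      hence zp: "z > 0" using e0 by simp
      have "(z/2) powr (nu - 1) > 0" using zp by simp
      hence "(z/2) powr (nu - 1) / 2 * ?f z > 0" using claim1[of z] zp z by simp
      then show "\<exists>y. DERIV (bessel_J nu) z :> y \<and> y > 0" using bessel_deriv[OF nu zp] by blast
    qed
    moreover have "bessel_J nu e > 0"
      using bessel_BF[OF nu e0] smallx[of e] e0 by simp
    ultimately have "(x/2) powr nu * BF nu ((x/2)^2) > 0"
      using bessel_BF[OF nu x] by simp
    moreover have "(x/2) powr nu > 0" using x by simp
    ultimately show ?thesis by (simp add: zero_less_mult_iff)
  qed
  then show ?thesis using claim1[of x] x by simp
qed



lemma sign_ineq: fixes A p b q :: real
  assumes "A < 0" "p < 0" "b \<ge> 0" "q \<ge> 0"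
  shows "0 \<le> 3*A*p*q^2 - A*q^3 + 3*b*p^2*q - 3*b*p*q^2 + b*q^3"
proof -
  have "A*p > 0" using assms by (simp add: mult_neg_neg)
  hence t1: "3*A*p*q^2 \<ge> 0" by simp
  have "A*q^3 \<le> 0" using assms by (intro mult_nonpos_nonneg) auto
  hence t2: "- A*q^3 \<ge> 0" by simp
  have t3: "3*b*p^2*q \<ge> 0" using assms by simp
  have "b * (-p) * q^2 \<ge> 0" using assms by (intro mult_nonneg_nonneg) auto
  hence t4: "- 3*b*p*q^2 \<ge> 0" by simp
  have t5: "b*q^3 \<ge> 0" using assms by simp
  show ?thesis using t1 t2 t3 t4 t5 by linarith
qed

lemma ustar_ode: fixes alpha Q r nn :: real
  assumes r: "r > 0" and Q: "Q^3 = r" and al: "alpha^3 = 9*nn - 15"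
  shows "2*alpha/9*Q/r^2 + (nn-1)/r*(-alpha/3*Q/r) + (-alpha*Q)*(-alpha/3*Q/r)^3 = 0"
    and "(-alpha/3*Q/r)^3 = -(3*nn-5)/(9*r^2)"
    and "3*(-alpha*Q)*(-alpha/3*Q/r)^2 = -(3*nn-5)/r"
proof -
  have p3: "(-alpha/3*Q/r)^3 = -(3*nn-5)/(9*r^2)"
  proof -
    have "(-alpha/3*Q/r)^3 = - (alpha^3 * Q^3) / (27 * r^3)" by (simp add: power_divide power_mult_distrib)
    also have "\<dots> = -(3*nn-5)/(9*r^2)" unfolding al Q using r by (simp add: field_simps power3_eq_cube power2_eq_square)
    finally show ?thesis .
  qed
  show "(-alpha/3*Q/r)^3 = -(3*nn-5)/(9*r^2)" by (rule p3)
  have "3*(-alpha*Q)*(-alpha/3*Q/r)^2 = - (alpha^3 * Q^3) / (3 * r^2)"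
    by (simp add: power_divide power_mult_distrib power2_eq_square power3_eq_cube field_simps)
  also have "\<dots> = -(3*nn-5)/r" unfolding al Q using r by (simp add: field_simps power2_eq_square)
  finally show "3*(-alpha*Q)*(-alpha/3*Q/r)^2 = -(3*nn-5)/r" .
  have "(-alpha*Q)*(-alpha/3*Q/r)^3 = (alpha*Q) * (3*nn-5)/(9*r^2)" unfolding p3 using r by (simp add: field_simps)
  then show "2*alpha/9*Q/r^2 + (nn-1)/r*(-alpha/3*Q/r) + (-alpha*Q)*(-alpha/3*Q/r)^3 = 0"
    using r by (simp add: field_simps power2_eq_square)
qed

lemma v_ode: fixes K P r mu nu nn B0 B1 B2 :: real
  assumes r: "r > 0" and nu: "nu^2 = (36*nn^2 - 96*nn + 61)/36"
    and ode: "mu*r^2*B2 + (nu+1)*B1 + B0 = 0"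
  shows "K*((nn - 3/2 + nu)*((nn - 3/2 + nu)-1)*P/r^2*B0 + 4*mu*(nn - 3/2 + nu)*P*B1 + P*(4*mu^2*r^2*B2 + 2*mu*B1))
     + (4-2*nn)/r * (K*((nn - 3/2 + nu)*P/r*B0 + 2*mu*r*P*B1))
     - (3*nn-5)/(9*r^2) * (K*P*B0) + 4*mu*(K*P*B0) = 0"
proof -
  have B0: "B0 = - mu*r^2*B2 - (nu+1)*B1" using ode by linarith
  have "r^2 * (K*((nn - 3/2 + nu)*((nn - 3/2 + nu)-1)*P/r^2*B0 + 4*mu*(nn - 3/2 + nu)*P*B1 + P*(4*mu^2*r^2*B2 + 2*mu*B1))
     + (4-2*nn)/r * (K*((nn - 3/2 + nu)*P/r*B0 + 2*mu*r*P*B1))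
     - (3*nn-5)/(9*r^2) * (K*P*B0) + 4*mu*(K*P*B0))
     = K*P*((nu^2 - (36*nn^2 - 96*nn + 61)/36)*B0 + 4*mu*r^2*(mu*r^2*B2 + (nu+1)*B1 + B0))"
    using r by (simp add: field_simps power2_eq_square)
  also have "\<dots> = 0" using nu ode by simp
  finally show ?thesis using r by simp
qed


lemma combine: fixes p2 q2 p q A b r nn L :: real
  assumes r: "r > 0"
  and e1: "p2 + (nn-1)/r*p + A*p^3 = 0" and e2: "p^3 = -(3*nn-5)/(9*r^2)"
  and e3: "3*A*p^2 = -(3*nn-5)/r"
  and e4: "q2 + (4-2*nn)/r*q - (3*nn-5)/(9*r^2)*b + L*b = 0"
  and s: "A < 0" "p < 0" "b \<ge> 0" "q \<ge> 0"
  shows "L*b \<le> (p2 - q2) + (nn-1)/r*(p-q) + (A-b)*(p-q)^3"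
proof -
  have P2: "p2 = - ((nn-1)/r*p) - A*p^3" using e1 by linarith
  have Q2: "q2 = - ((4-2*nn)/r*q) - p^3*b - L*b" proof -
    have "p^3*b = -(3*nn-5)/(9*r^2)*b" using e2 by simp
    hence "p^3*b = -((3*nn-5)/(9*r^2)*b)" using r by (simp add: field_simps)
    then show ?thesis using e4 by linarith
  qed
  have c: "(4-2*nn)/r*q - (nn-1)/r*q = 3*A*p^2*q"
  proof -
    have "(4-2*nn)/r*q - (nn-1)/r*q = ((4-2*nn) - (nn-1))/r*q" by (simp add: diff_divide_distrib left_diff_distrib)
    also have "(4-2*nn) - (nn-1) = -(3*nn-5)" by simp
    finally show ?thesis using e3 by simp
  qed
  have "(p2 - q2) + (nn-1)/r*(p-q) + (A-b)*(p-q)^3 - L*b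
     = - A*p^3 + ((4-2*nn)/r*q - (nn-1)/r*q) + p^3*b + (A-b)*(p-q)^3"
    unfolding P2 Q2 by (simp add: algebra_simps add_divide_distrib[symmetric] diff_divide_distrib[symmetric])
  also have "\<dots> = 3*A*p*q^2 - A*q^3 + 3*b*p^2*q - 3*b*p*q^2 + b*q^3"
    unfolding c by (simp add: algebra_simps power2_eq_square power3_eq_cube)
  finally show ?thesis using sign_ineq[OF s] by linarith
qed



theorem mainTheorem9:
  fixes n :: nat and C lm R r t :: real
  assumes "n \<ge> 2" and "C > 0" and "lm > 0" and "R > 0"
    and "R < min (x1_of n / lm) (sqrt (3/8 * (3 * real n - 5) * (2 * real n - 3)^3))"
    and "0 < r" and "r < R" and "t > 0"
  shows "\<exists>ut ur urr.
      ((\<lambda>s. usol n C lm r s) has_real_derivative ut) (at t) \<and>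
      ((\<lambda>\<rho>. usol n C lm \<rho> t) has_real_derivative ur) (at r) \<and>
      ((\<lambda>\<rho>. deriv (\<lambda>\<sigma>. usol n C lm \<sigma> t) \<rho>) has_real_derivative urr) (at r) \<and>
      ut \<le> urr + (real n - 1) / r * ur + usol n C lm r t * ur ^ 3"
proof -
  define nu where "nu = nu_of n"
  have nn: "real n \<ge> 2" using assms(1) by simp
  have X: "36 * (real n)^2 - 96 * real n + 61 > 0"
  proof -
    have "36 * (real n)^2 - 96 * real n + 61 = (6 * real n - 8)^2 - 3" by (simp add: power2_eq_square algebra_simps)
    moreover have "(6 * real n - 8)^2 \<ge> 4^2" using nn by (intro power_mono) auto
    ultimately show ?thesis by simp
  qed
  have nupos: "nu > 0" unfolding nu_def nu_of_def using X by simp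
  have nu2: "nu^2 = (36 * (real n)^2 - 96 * real n + 61)/36"
    unfolding nu_def nu_of_def using X by (simp add: power_divide)
  define al where "al = alpha_of n"
  have al3: "al^3 = 9 * real n - 15" unfolding al_def alpha_of_def by (simp add: odd_real_root_pow)
  have alpos: "al > 0" unfolding al_def alpha_of_def using nn by simp
  define a where "a = real n - 3/2"
  have apos: "a > 0" using nn by (simp add: a_def)
  define s where "s = a + nu"
  define mu where "mu = lm^2/4"
  define K where "K = C * exp (-(lm*lm*t)) * (lm/2) powr nu"
  have Kpos: "K > 0" unfolding K_def using assms by simp
  define U where "U = (\<lambda>\<rho>. - al * \<rho> powr (1/3) - K * (\<rho> powr s * BF nu (mu*\<rho>^2)))"
  have Ueq: "usol n C lm \<rho> t = U \<rho>" if rho: "\<rho> > 0" for \<rho>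
  proof -
    have "bessel_J nu (lm * \<rho>) = (lm*\<rho>/2) powr nu * BF nu ((lm*\<rho>/2)^2)"
      using bessel_BF[OF nupos] rho assms(3) by simp
    also have "(lm*\<rho>/2) powr nu = (lm/2) powr nu * \<rho> powr nu"
      using powr_mult[of "lm/2" \<rho> nu] rho assms(3) by (simp add: mult.commute)
    also have "(lm*\<rho>/2)^2 = mu*\<rho>^2" by (simp add: mu_def power_divide power_mult_distrib)
    finally have J: "bessel_J nu (lm * \<rho>) = (lm/2) powr nu * \<rho> powr nu * BF nu (mu*\<rho>^2)" .
    have "\<rho> powr (real n - 3/2) * \<rho> powr nu = \<rho> powr s"
      by (simp add: s_def a_def powr_add)
    then show ?thesis unfolding usol_def ustar_def vfun_def U_def J K_def nu_def[symmetric] al_def[symmetric]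
      by (simp add: algebra_simps)
  qed
  have g: "((\<lambda>\<rho>. mu*\<rho>^2) has_real_derivative 2*mu*x) (at x)" for x
    by (auto intro!: derivative_eq_intros)
  define U1 where "U1 = (\<lambda>\<rho>. - al * ((1/3) * \<rho> powr (1/3 - 1))
      - K * (s * \<rho> powr (s - 1) * BF nu (mu*\<rho>^2) + \<rho> powr s * (BF1 nu (mu*\<rho>^2) * (2*mu*\<rho>))))"
  have dU: "(U has_real_derivative U1 \<rho>) (at \<rho>)" if rho: "\<rho> > 0" for \<rho>
    unfolding U_def U1_def
    apply (rule DERIV_cong)
     apply (rule DERIV_diff DERIV_cmult DERIV_mult has_real_derivative_powr rho BF_chain[OF nupos g])+
    apply (simp add: algebra_simps)
    done
  define U2 where "U2 = (\<lambda>\<rho>. - al * ((1/3) * ((1/3 - 1) * \<rho> powr (1/3 - 1 - 1)))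
      - K * ((s * ((s - 1) * \<rho> powr (s - 1 - 1)) * BF nu (mu*\<rho>^2) + (s * \<rho> powr (s - 1)) * (BF1 nu (mu*\<rho>^2) * (2*mu*\<rho>)))
           + ((s * \<rho> powr (s - 1)) * (BF1 nu (mu*\<rho>^2) * (2*mu*\<rho>)) + \<rho> powr s * (BF2 nu (mu*\<rho>^2) * (2*mu*\<rho>) * (2*mu*\<rho>) + BF1 nu (mu*\<rho>^2) * (2*mu)))))"
  have dU1: "(U1 has_real_derivative U2 r) (at r)"
    unfolding U1_def U2_def
    apply (rule DERIV_cong)
     apply (rule DERIV_diff DERIV_cmult DERIV_mult has_real_derivative_powr assms(6) BF_chain[OF nupos g]
        BF1_chain[OF nupos g] DERIV_ident DERIV_const DERIV_add)+
    apply (simp add: algebra_simps)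
    done
  have open0: "open {0::real<..}" by simp
  have dur: "((\<lambda>\<rho>. usol n C lm \<rho> t) has_real_derivative U1 r) (at r)"
    by (rule has_field_derivative_transform_within_open[OF dU[OF assms(6)] open0]) (use assms(6) Ueq in auto)
  have derv: "deriv (\<lambda>\<sigma>. usol n C lm \<sigma> t) \<rho> = U1 \<rho>" if rho: "\<rho> > 0" for \<rho>
    by (rule DERIV_imp_deriv, rule has_field_derivative_transform_within_open[OF dU[OF rho] open0])
       (use rho Ueq in auto)
  have durr: "((\<lambda>\<rho>. deriv (\<lambda>\<sigma>. usol n C lm \<sigma> t) \<rho>) has_real_derivative U2 r) (at r)"
    by (rule has_field_derivative_transform_within_open[OF dU1 open0]) (use assms(6) derv in auto)
  define Q where "Q = r powr (1/3)"
  define P where "P = r powr s"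
  define B0 where "B0 = BF nu (mu*r^2)"
  define B1 where "B1 = BF1 nu (mu*r^2)"
  define B2 where "B2 = BF2 nu (mu*r^2)"
  have vval: "vfun n C lm r t = K * (P * B0)"
    using Ueq[OF assms(6)] unfolding usol_def U_def ustar_def P_def B0_def al_def by simp
  have dut: "((\<lambda>s. usol n C lm r s) has_real_derivative (4*mu) * (K*P*B0)) (at t)"
    unfolding usol_def vfun_def
    apply (rule DERIV_cong)
     apply (rule derivative_eq_intros refl)+
    using vval unfolding vfun_def mu_def by (simp add: algebra_simps power2_eq_square)
  have r0: "r > 0" using assms(6) .
  have Qpos: "Q > 0" unfolding Q_def using r0 by simp
  have Ppos: "P > 0" unfolding P_def using r0 by simp
  have pw1: "r powr (x - 1) = r powr x / r" for x using r0 by (simp add: powr_diff)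
  have pw2: "r powr (x - 1 - 1) = r powr x / r^2" for x using r0 by (simp add: powr_diff power2_eq_square)
  have Q3: "Q^3 = r"
  proof -
    have "Q^3 = r powr (1/3 + 1/3 + 1/3)" unfolding Q_def power3_eq_cube by (simp only: powr_add)
    also have "\<dots> = r" using r0 by simp
    finally show ?thesis .
  qed
  have xl: "lm * r < (LEAST x. x > 0 \<and> deriv (bessel_J nu) x = 0)"
  proof -
    have "R < x1_of n / lm" using assms(5) by simp
    hence "lm * R < x1_of n" using assms(3) by (simp add: field_simps)
    moreover have "lm * r < lm * R" using assms(3,7) by simp
    ultimately show ?thesis unfolding x1_of_def nu_def by simp
  qed
  have bp: "BF nu ((lm*r/2)^2) > 0 \<and> BG nu ((lm*r/2)^2) > 0"
    using bessel_pos[OF nupos _ xl] assms(3) r0 by simp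
  have arg: "(lm*r/2)^2 = mu*r^2" by (simp add: mu_def power_divide power_mult_distrib)
  have B0pos: "B0 > 0" using bp unfolding arg B0_def by simp
  have BGpos: "nu * B0 + 2 * (mu*r^2) * B1 > 0" using bp unfolding arg B0_def B1_def BG_def by simp
  define p where "p = -al/3*Q/r"
  define q where "q = K*(s*P/r*B0 + 2*mu*r*P*B1)"
  define p2 where "p2 = 2*al/9*Q/r^2"
  define q2 where "q2 = K*(s*(s-1)*P/r^2*B0 + 4*(mu*(s*(P*B1))) + P*(4*mu^2*r^2*B2 + 2*mu*B1))"
  define A where "A = -al*Q"
  define b where "b = K*P*B0"
  have eU: "usol n C lm r t = A - b" using Ueq[OF r0] unfolding U_def A_def b_def Q_def P_def B0_def by simp
  have eU1: "U1 r = p - q" unfolding U1_def p_def q_def pw1 Q_def[symmetric] P_def[symmetric] B0_def[symmetric] B1_def[symmetric]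
    by (simp add: algebra_simps)
  have eU2: "U2 r = p2 - q2" unfolding U2_def p2_def q2_def pw1 pw2 Q_def[symmetric] P_def[symmetric] B0_def[symmetric] B1_def[symmetric] B2_def[symmetric]
    using r0 by (simp add: field_simps power2_eq_square)
  have qnn: "q \<ge> 0"
  proof -
    have "q = K * (P/r) * (a*B0 + (nu * B0 + 2 * (mu*r^2) * B1))"
      unfolding q_def s_def using r0 by (simp add: field_simps power2_eq_square)
    moreover have "a*B0 + (nu * B0 + 2 * (mu*r^2) * B1) > 0" using mult_pos_pos[OF apos B0pos] BGpos by linarith
    ultimately show ?thesis using Kpos Ppos r0 by simp
  qed
  have u1: "p2 + (real n-1)/r*p + A*p^3 = 0" "p^3 = -(3*real n-5)/(9*r^2)" "3*A*p^2 = -(3*real n-5)/r"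
    unfolding p2_def p_def A_def by (rule ustar_ode[OF r0 Q3 al3])+
  have ode: "mu * r^2 * B2 + (nu + 1) * B1 + B0 = 0"
    using BF_ode[OF nupos, of "mu*r^2"] unfolding B0_def B1_def B2_def by (simp add: mult.assoc)
  have e4: "q2 + (4-2*real n)/r*q - (3*real n-5)/(9*r^2)*b + (4*mu)*b = 0"
    using v_ode[OF r0 nu2 ode, of K P] unfolding q2_def q_def b_def s_def a_def
    by (simp add: algebra_simps)
  have ineq: "(4*mu)*b \<le> (p2 - q2) + (real n-1)/r*(p-q) + (A-b)*(p-q)^3"
    by (rule combine[OF r0 u1 e4]) (use alpos Qpos r0 Kpos Ppos B0pos qnn in \<open>auto simp: A_def p_def b_def\<close>)
  show ?thesis
    apply (rule exI[of _ "(4*mu) * (K*P*B0)"], rule exI[of _ "U1 r"], rule exI[of _ "U2 r"])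
    using dut dur durr ineq unfolding eU eU1 eU2 b_def by (simp add: mult.assoc)
qed


end
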